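(* Let $\mathcal{C}$ be a finite set of classes and let $(\ell_\star, \ell_a, \ell_b)$ be a random tuple of $\mathcal{C}$-valued labels ($\ell_\star$ the oracle label) such that for every $\mathcal{C}$-valued random variable $\ell_\times$ with $\ell_\times \ne \ell_\star$ almost surely, $\mathbb{P}(\ell_b = \ell_\star \mid \ell_a \ne \ell_\star) \ge \mathbb{P}(\ell_b = \ell_\times \mid \ell_a \ne \ell_\star)$. Let $(\ell_\star^{(n)}, \ell_a^{(n)}, \ell_b^{(n)})$, $n = 1, \dots, N$, be $N$ independent copies of this tuple, and let $\mathbb{P}^{(N)}(\ell_a = \ell_b) = \frac{1}{N}\sum_{n=1}^N [\ell_a^{(n)} = \ell_b^{(n)}]$. Then for every $t_l > 0$, with probability at least $1 - \delta_l$ where $\delta_l = \exp(-2 N t_l^2)$, $$\mathbb{P}^{(N)}(\ell_a = \ell_b) \le t_l + \mathbb{P}(\ell_b = \ell_\star).$$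
   Context: $[\cdot]$ denotes the Iverson bracket. Conditional probabilities given an event of probability zero are taken to be $0$. *)

theory Defs
  imports "HOL-Probability.Probability"
begin

definition cond_prob :: "'a measure \<Rightarrow> 'a set \<Rightarrow> 'a set \<Rightarrow> real" where
  "cond_prob M A B = (if measure M B = 0 then 0 else measure M (A \<inter> B) / measure M B)"

end

theory Submission imports Defs begin

lemma eqset_sets:
  assumes "f \<in> measurable M (count_space C)" "g \<in> measurable M (count_space C)" "finite C"
  shows "{\<omega>\<in>space M. f \<omega> = g \<omega>} \<in> sets M"
proof -
  have "{\<omega>\<in>space M. f \<omega> = g \<omega>} = (\<Union>c\<in>C. (f -` {c} \<inter> space M) \<inter> (g -` {c} \<inter> space M))"
    using assms(1) by (auto simp: measurable_def)
  also have "\<dots> \<in> sets M"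
    using assms by (intro sets.finite_UN) (auto intro!: measurable_sets[where A="count_space C"])
  finally show ?thesis .
qed

lemma neqset_sets:
  assumes "f \<in> measurable M (count_space C)" "g \<in> measurable M (count_space C)" "finite C"
  shows "{\<omega>\<in>space M. f \<omega> \<noteq> g \<omega>} \<in> sets M"
proof -
  have "{\<omega>\<in>space M. f \<omega> \<noteq> g \<omega>} = space M - {\<omega>\<in>space M. f \<omega> = g \<omega>}" by auto
  thus ?thesis using eqset_sets[OF assms] by auto
qed

lemma key:
  fixes M :: "'a measure" and C :: "'c set" and ls la lb :: "'a \<Rightarrow> 'c"
  assumes M: "prob_space M"
    and C: "finite C"
    and ls: "ls \<in> measurable M (count_space C)"
    and la: "la \<in> measurable M (count_space C)"
    and lb: "lb \<in> measurable M (count_space C)"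
    and hyp: "\<forall>lx. lx \<in> measurable M (count_space C) \<longrightarrow> (AE \<omega> in M. lx \<omega> \<noteq> ls \<omega>) \<longrightarrow>
        cond_prob M {\<omega>\<in>space M. lb \<omega> = lx \<omega>} {\<omega>\<in>space M. la \<omega> \<noteq> ls \<omega>}
        \<le> cond_prob M {\<omega>\<in>space M. lb \<omega> = ls \<omega>} {\<omega>\<in>space M. la \<omega> \<noteq> ls \<omega>}"
  shows "measure M {\<omega>\<in>space M. la \<omega> = lb \<omega>} \<le> measure M {\<omega>\<in>space M. lb \<omega> = ls \<omega>}"
proof -
  interpret prob_space M by fact
  define A where "A = {\<omega>\<in>space M. la \<omega> = lb \<omega>}"
  define L where "L = {\<omega>\<in>space M. lb \<omega> = ls \<omega>}"
  define B where "B = {\<omega>\<in>space M. la \<omega> \<noteq> ls \<omega>}"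
  have As: "A \<in> sets M" unfolding A_def by (rule eqset_sets[OF la lb C])
  have Ls: "L \<in> sets M" unfolding L_def by (rule eqset_sets[OF lb ls C])
  have Bs: "B \<in> sets M" unfolding B_def by (rule neqset_sets[OF la ls C])
  have AB: "A - B = L - B" unfolding A_def B_def L_def by auto
  have mA: "measure M A = measure M (A \<inter> B) + measure M (A - B)"
    using finite_measure_Diff'[OF As Bs] by simp
  have mL: "measure M L = measure M (L \<inter> B) + measure M (L - B)"
    using finite_measure_Diff'[OF Ls Bs] by simp
  have core: "measure M (A \<inter> B) \<le> measure M (L \<inter> B)"
  proof (cases "measure M B = 0")
    case True
    have "measure M (A \<inter> B) \<le> measure M B" using Bs by (intro finite_measure_mono) auto
    thus ?thesis using True measure_nonneg[of M "L \<inter> B"] by linarith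
  next
    case False
    hence Bpos: "measure M B > 0" using measure_nonneg[of M B] by linarith
    show ?thesis
    proof (cases "\<exists>c\<in>C. \<exists>d\<in>C. c \<noteq> d")
      case False
      have eq: "la \<omega> = ls \<omega>" if "\<omega> \<in> space M" for \<omega>
      proof -
        have nd: "\<forall>c\<in>C. \<forall>d\<in>C. c = d" using False by simp
        have "la \<omega> \<in> C" "ls \<omega> \<in> C"
          using measurable_space[OF la that] measurable_space[OF ls that] by auto
        thus ?thesis using nd by simp
      qed
      have "B = {}" unfolding B_def using eq by auto
      thus ?thesis by simp
    next
      case True
      define f where "f c = (SOME d. d \<in> C \<and> d \<noteq> c)" for c
      have f: "f c \<in> C \<and> f c \<noteq> c" for c
      proof -
        obtain c0 d0 where cd: "c0 \<in> C" "d0 \<in> C" "c0 \<noteq> d0" using True by blast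
        have "\<exists>d. d \<in> C \<and> d \<noteq> c" using cd by (cases "c = c0") auto
        thus ?thesis unfolding f_def by (rule someI_ex)
      qed
      define lx where "lx \<omega> = (if \<omega> \<in> B then la \<omega> else f (ls \<omega>))" for \<omega>
      have fm: "f \<in> measurable (count_space C) (count_space C)"
        using f by (auto simp: measurable_count_space_eq1)
      have lxm: "lx \<in> measurable M (count_space C)"
        unfolding lx_def
        by (rule measurable_If_set[OF la measurable_comp[OF ls fm, unfolded comp_def]]) (use Bs in auto)
      have "AE \<omega> in M. lx \<omega> \<noteq> ls \<omega>"
        by (rule AE_I2) (auto simp: lx_def B_def f)
      with hyp lxm have h: "cond_prob M {\<omega>\<in>space M. lb \<omega> = lx \<omega>} B \<le> cond_prob M L B"
        unfolding L_def B_def by blast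
      have "{\<omega>\<in>space M. lb \<omega> = lx \<omega>} \<inter> B = A \<inter> B"
        unfolding A_def B_def lx_def by auto
      with h False have "measure M (A \<inter> B) / measure M B \<le> measure M (L \<inter> B) / measure M B"
        unfolding cond_prob_def by simp
      thus ?thesis using Bpos by (simp add: divide_right_mono_neg divide_le_cancel)
    qed
  qed
  show ?thesis using mA mL AB core unfolding A_def[symmetric] L_def[symmetric] by simp
qed

theorem theorem6:
  fixes M :: "'a measure" and P :: "'b measure" and C :: "'c set"
    and ls la lb :: "'a \<Rightarrow> 'c"
    and X :: "nat \<Rightarrow> 'b \<Rightarrow> 'c \<times> 'c \<times> 'c"
    and N :: nat and t :: real
  assumes M: "prob_space M"
    and C: "finite C"
    and ls: "ls \<in> measurable M (count_space C)"
    and la: "la \<in> measurable M (count_space C)"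
    and lb: "lb \<in> measurable M (count_space C)"
    and hyp: "\<forall>lx. lx \<in> measurable M (count_space C) \<longrightarrow> (AE \<omega> in M. lx \<omega> \<noteq> ls \<omega>) \<longrightarrow>
        cond_prob M {\<omega>\<in>space M. lb \<omega> = lx \<omega>} {\<omega>\<in>space M. la \<omega> \<noteq> ls \<omega>}
        \<le> cond_prob M {\<omega>\<in>space M. lb \<omega> = ls \<omega>} {\<omega>\<in>space M. la \<omega> \<noteq> ls \<omega>}"
    and P: "prob_space P"
    and indep: "prob_space.indep_vars P (\<lambda>_. count_space (C \<times> C \<times> C)) X {1..N}"
    and copies: "\<forall>n\<in>{1..N}. distr P (count_space (C \<times> C \<times> C)) (X n)
                   = distr M (count_space (C \<times> C \<times> C)) (\<lambda>\<omega>. (ls \<omega>, la \<omega>, lb \<omega>))"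
    and t: "t > 0"
  shows "measure P {\<omega>\<in>space P.
            (1 / real N) * real (card {n\<in>{1..N}. fst (snd (X n \<omega>)) = snd (snd (X n \<omega>))})
              \<le> t + measure M {\<omega>\<in>space M. lb \<omega> = ls \<omega>}}
         \<ge> 1 - exp (- 2 * real N * t ^ 2)"
proof (cases "N = 0")
  case True
  show ?thesis using True by (simp add: measure_nonneg)
next
  case False
  interpret P: prob_space P by fact
  interpret Mp: prob_space M by fact
  let ?CS = "count_space (C \<times> C \<times> C)"
  define g where "g p = (of_bool (fst (snd p) = snd (snd p)) :: real)" for p :: "'c \<times> 'c \<times> 'c"
  define Z where "Z n \<omega> = g (X n \<omega>)" for n \<omega>
  define h where "h \<omega> = (ls \<omega>, la \<omega>, lb \<omega>)" for \<omega>
  define p where "p = measure M {\<omega>\<in>space M. lb \<omega> = ls \<omega>}"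
  define \<mu> where "\<mu> = P.expectation (Z 1)"
  have N1: "1 \<in> {1..N}" using False by auto
  have Xm: "X n \<in> measurable P ?CS" if "n \<in> {1..N}" for n
    using indep that unfolding P.indep_vars_def by blast
  have gm: "g \<in> borel_measurable ?CS" by simp
  have Zm: "Z n \<in> borel_measurable P" if "n \<in> {1..N}" for n
    unfolding Z_def using measurable_comp[OF Xm[OF that] gm] by (simp add: comp_def)
  have hm: "h \<in> measurable M ?CS"
  proof -
    have cC: "countable (C \<times> C \<times> C)" using C by (simp add: countable_finite)
    have 1: "h \<in> space M \<rightarrow> C \<times> C \<times> C"
      using measurable_space[OF ls] measurable_space[OF la] measurable_space[OF lb] by (auto simp: h_def)
    have 2: "h -` {q} \<inter> space M \<in> sets M" if qC: "q \<in> C \<times> C \<times> C" for q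
    proof -
      obtain a b c where q: "q = (a, b, c)" by (cases q) auto
      have "h -` {q} \<inter> space M = (ls -` {a} \<inter> space M) \<inter> (la -` {b} \<inter> space M) \<inter> (lb -` {c} \<inter> space M)"
        by (auto simp: h_def q)
      also have "\<dots> \<in> sets M"
      proof -
        have a: "a \<in> C" "b \<in> C" "c \<in> C" using qC q by auto
        have f1: "ls -` {a} \<inter> space M \<in> sets M" using measurable_sets[OF ls] a by simp
        have f2: "la -` {b} \<inter> space M \<in> sets M" using measurable_sets[OF la] a by simp
        have f3: "lb -` {c} \<inter> space M \<in> sets M" using measurable_sets[OF lb] a by simp
        show ?thesis by (rule sets.Int[OF sets.Int[OF f1 f2] f3])
      qed
      finally show ?thesis .
    qed
    show ?thesis using 1 2 by (subst measurable_count_space_eq_countable[OF cC]) blast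
  qed
  have indepZ: "P.indep_vars (\<lambda>_. borel) Z {1..N}"
    unfolding Z_def by (rule P.indep_vars_compose2[OF indep]) simp
  have distrZ: "distr P borel (Z i) = distr P borel (Z 1)" if "i \<in> {1..N}" for i
  proof -
    have "distr P borel (Z i) = distr (distr P ?CS (X i)) borel g"
      unfolding Z_def by (subst distr_distr[OF gm Xm[OF that]]) (simp add: comp_def)
    also have "\<dots> = distr (distr P ?CS (X 1)) borel g" using copies that N1 by simp
    also have "\<dots> = distr P borel (Z 1)"
      unfolding Z_def by (subst distr_distr[OF gm Xm[OF N1]]) (simp add: comp_def)
    finally show ?thesis .
  qed
  have mu: "\<mu> = measure M {\<omega>\<in>space M. la \<omega> = lb \<omega>}"
  proof -
    have "\<mu> = integral\<^sup>L (distr P ?CS (X 1)) g"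
      unfolding \<mu>_def Z_def by (subst integral_distr[OF Xm[OF N1] gm]) simp
    also have "\<dots> = integral\<^sup>L (distr M ?CS h) g" using copies N1 by (simp add: h_def[abs_def])
    also have "\<dots> = integral\<^sup>L M (\<lambda>\<omega>. g (h \<omega>))" by (rule integral_distr[OF hm gm])
    also have "\<dots> = integral\<^sup>L M (indicator {\<omega>\<in>space M. la \<omega> = lb \<omega>})"
      by (intro Bochner_Integration.integral_cong) (auto simp: g_def h_def indicator_def)
    also have "\<dots> = measure M {\<omega>\<in>space M. la \<omega> = lb \<omega>}"
      using eqset_sets[OF la lb C] by simp
    finally show ?thesis .
  qed
  have mup: "\<mu> \<le> p" unfolding mu p_def by (rule key[OF M C ls la lb hyp])
  interpret H: Hoeffding_ineq_iid P "{1..N}" Z "Z 1" 0 1 \<mu>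
  proof unfold_locales
    show "finite {1..N}" by simp
    show "P.indep_vars (\<lambda>_. borel) Z {1..N}" by (rule indepZ)
    show "\<And>i. i \<in> {1..N} \<Longrightarrow> distr P borel (Z i) = distr P borel (Z 1)" by (rule distrZ)
    show "Z 1 \<in> borel_measurable P" by (rule Zm[OF N1])
    show "AE x in P. Z 1 x \<in> {0..1}" by (intro AE_I2) (simp add: Z_def g_def)
    show "\<mu> \<equiv> P.expectation (Z 1)" unfolding \<mu>_def .
  qed
  have hoef: "P.prob {x\<in>space P. (\<Sum>i\<in>{1..N}. Z i x) / real N \<ge> \<mu> + t} \<le> exp (-2 * real N * t\<^sup>2)"
    using H.Hoeffding_ineq_ge'[of t] t False by simp
  define E where "E = {x\<in>space P. (\<Sum>i\<in>{1..N}. Z i x) / real N \<ge> \<mu> + t}"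
  define S where "S = {\<omega>\<in>space P.
            (1 / real N) * real (card {n\<in>{1..N}. fst (snd (X n \<omega>)) = snd (snd (X n \<omega>))})
              \<le> t + p}"
  have sumZ: "(\<Sum>i\<in>{1..N}. Z i x) = real (card {n\<in>{1..N}. fst (snd (X n x)) = snd (snd (X n x))})" for x
    unfolding Z_def g_def by (simp add: sum_of_bool_eq Int_def)
  have S_eq: "S = {x\<in>space P. (\<Sum>i\<in>{1..N}. Z i x) / real N \<le> t + p}"
    unfolding S_def sumZ by simp
  have Es: "E \<in> sets P" unfolding E_def using Zm by measurable
  have Ss: "S \<in> sets P" unfolding S_eq using Zm by measurable
  have sub: "space P - E \<subseteq> S"
  proof
    fix x assume x: "x \<in> space P - E"
    have xs: "x \<in> space P" using x by blast
    have nE: "x \<notin> E" using x by blast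
    have "\<not> ((\<Sum>i\<in>{1..N}. Z i x) / real N \<ge> \<mu> + t)" using nE xs unfolding E_def by simp
    hence "(\<Sum>i\<in>{1..N}. Z i x) / real N \<le> t + p" using mup by linarith
    thus "x \<in> S" using xs by (simp add: S_eq)
  qed
  have "1 - exp (-2 * real N * t\<^sup>2) \<le> 1 - P.prob E" using hoef unfolding E_def by simp
  also have "\<dots> = P.prob (space P - E)" using P.prob_compl[OF Es] by simp
  also have "\<dots> \<le> P.prob S" using sub Ss by (intro P.finite_measure_mono) auto
  finally show ?thesis unfolding S_def p_def by simp
qed

end
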